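(* Let $G$ be a regular graph on $n$ vertices. Then there is an ordering of the edges of $G$ such that any $n/12$ consecutive edges in this ordering form a matching. *)

theory Defs
  imports Complex_Main
begin

definition simple_graph :: "'a set \<Rightarrow> 'a set set \<Rightarrow> bool" where
  "simple_graph V E \<longleftrightarrow> finite V \<and> (\<forall>e\<in>E. e \<subseteq> V \<and> card e = 2)"

definition degree :: "'a set set \<Rightarrow> 'a \<Rightarrow> nat" where
  "degree E v = card {e\<in>E. v \<in> e}"

definition regular_graph :: "'a set \<Rightarrow> 'a set set \<Rightarrow> bool" where
  "regular_graph V E \<longleftrightarrow> simple_graph V E \<and> (\<exists>d. \<forall>v\<in>V. degree E v = d)"

definition is_matching :: "'a set set \<Rightarrow> bool" where
  "is_matching M \<longleftrightarrow> (\<forall>e\<in>M. \<forall>f\<in>M. e \<noteq> f \<longrightarrow> e \<inter> f = {})"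

end

theory Submission
  imports Defs
begin

lemma sq_ineq:
  fixes p q p' q' :: nat
  assumes "p' + q' = p + q" "p' < p" "q' < p" "q + 2 \<le> p"
  shows "p'^2 + q'^2 < p^2 + q^2"
proof -
  obtain a where a: "p = Suc (p' + a)" using assms(2) less_imp_Suc_add by blast
  have q': "q' = Suc (q + a)" using assms(1) a(1) by simp
  have "q < p'" using assms(3) a q' by simp
  then obtain b where b: "p' = Suc (q + b)" using less_imp_Suc_add by blast
  have "p^2 + q^2 = p'^2 + q'^2 + 2 * Suc a * Suc b"
    unfolding a q' b by (simp add: power2_eq_square algebra_simps)
  thus ?thesis by simp
qed

lemma matchingD: "is_matching M \<Longrightarrow> e \<in> M \<Longrightarrow> f \<in> M \<Longrightarrow> e \<noteq> f \<Longrightarrow> e \<inter> f = {}"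
  unfolding is_matching_def by blast

lemma swap:
  assumes "finite A" "finite B" "A \<inter> B = {}" "is_matching A" "is_matching B"
    "\<forall>e\<in>A\<union>B. card e = 2" "card B + 2 \<le> card A"
  shows "\<exists>A' B'. is_matching A' \<and> is_matching B' \<and> A' \<inter> B' = {} \<and> A' \<union> B' = A \<union> B
          \<and> card A' < card A \<and> card B' < card A"
  using assms
proof (induction "card A" arbitrary: A B rule: less_induct)
  case less
  show ?case
  proof (cases "\<exists>a\<in>A. \<forall>b\<in>B. a \<inter> b = {}")
    case True
    then obtain a where a: "a\<in>A" "\<forall>b\<in>B. a\<inter>b={}" by blast
    have "is_matching (A - {a})" using less.prems(4) unfolding is_matching_def by blast
    moreover have "is_matching (insert a B)" using less.prems(5) a unfolding is_matching_def by blast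
    moreover have "(A - {a}) \<inter> insert a B = {}" using less.prems(3) by blast
    moreover have "(A - {a}) \<union> insert a B = A \<union> B" using a by blast
    moreover have "card (A - {a}) < card A" using a less.prems(1) by (meson card_Diff1_less)
    moreover have "card (insert a B) < card A"
    proof -
      have "a \<notin> B" using a(1) less.prems(3) by blast
      thus ?thesis using less.prems(2,7) by simp
    qed
    ultimately show ?thesis by blast
  next
    case False
    hence meet: "\<forall>a\<in>A. \<exists>b\<in>B. a\<inter>b \<noteq> {}" by blast
    have fe: "\<And>e. e \<in> A \<union> B \<Longrightarrow> finite e" using less.prems(6)
      by (metis card.infinite zero_neq_numeral)
    have cA: "card (\<Union>A) = 2 * card A"
    proof -
      have "pairwise disjnt A" using less.prems(4) unfolding is_matching_def pairwise_def disjnt_def by blast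
      hence "card (\<Union>A) = sum card A" using fe by (intro card_Union_disjoint) auto
      also have "\<dots> = sum (\<lambda>_. 2) A" using less.prems(6) by (intro sum.cong) auto
      finally show ?thesis by simp
    qed
    have cB: "card (\<Union>B) \<le> 2 * card B"
    proof -
      have "card (\<Union>B) \<le> sum card B" by (rule card_Union_le_sum_card)
      also have "\<dots> = sum (\<lambda>_. 2) B" using less.prems(6) by (intro sum.cong) auto
      finally show ?thesis by simp
    qed
    have "\<not> \<Union>A \<subseteq> \<Union>B"
    proof
      assume "\<Union>A \<subseteq> \<Union>B"
      moreover have "finite (\<Union>B)" using less.prems(2) fe by blast
      ultimately have "card (\<Union>A) \<le> card (\<Union>B)" by (rule card_mono[rotated])
      thus False using cA cB less.prems(7) by linarith
    qed
    then obtain v a where a: "a \<in> A" "v \<in> a" and v: "v \<notin> \<Union>B" by blast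
    have "card a = 2" using less.prems(6) a(1) by blast
    then obtain y z where yz: "a = {y,z}" "y \<noteq> z" by (meson card_2_iff)
    obtain w where w: "a = {v,w}" "w \<noteq> v"
    proof (cases "v = y")
      case True thus ?thesis using yz that by blast
    next
      case False hence "v = z" using yz a(2) by blast
      thus ?thesis using yz that by (metis insert_commute)
    qed
    obtain b where b: "b \<in> B" "a \<inter> b \<noteq> {}" using meet a(1) by blast
    have wb: "w \<in> b" using b v w(1) by blast
    have "card b = 2" using less.prems(6) b(1) by blast
    then obtain y2 z2 where yz2: "b = {y2,z2}" "y2 \<noteq> z2" by (meson card_2_iff)
    obtain x where x: "b = {w,x}" "x \<noteq> w"
    proof (cases "w = y2")
      case True thus ?thesis using yz2 that by blast
    next
      case False hence "w = z2" using yz2 wb by blast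
      thus ?thesis using yz2 that by (metis insert_commute)
    qed
    have xv: "x \<noteq> v" using v b(1) x(1) by blast
    define A0 where "A0 = A - {a}"
    define B0 where "B0 = B - {b}"
    have ab: "a \<noteq> b" using a(1) b(1) less.prems(3) by blast
    have cA0: "card A0 = card A - 1" using a(1) less.prems(1) unfolding A0_def by simp
    have cB0: "card B0 = card B - 1" using b(1) less.prems(2) unfolding B0_def by simp
    have "card B \<ge> 1" using b(1) less.prems(2) by (metis One_nat_def Suc_leI card_gt_0_iff empty_iff)
    have "\<exists>A' B'. is_matching A' \<and> is_matching B' \<and> A' \<inter> B' = {} \<and> A' \<union> B' = A0 \<union> B0
          \<and> card A' < card A0 \<and> card B' < card A0"
    proof (rule less.hyps)
      show "card A0 < card A" using cA0 a(1) less.prems(1) by (metis A0_def card_Diff1_less)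
      show "finite A0" "finite B0" using less.prems(1,2) A0_def B0_def by auto
      show "A0 \<inter> B0 = {}" using less.prems(3) A0_def B0_def by blast
      show "is_matching A0" "is_matching B0" using less.prems(4,5) A0_def B0_def
        unfolding is_matching_def by blast+
      show "\<forall>e\<in>A0\<union>B0. card e = 2" using less.prems(6) A0_def B0_def by blast
      show "card B0 + 2 \<le> card A0" using cA0 cB0 less.prems(7) \<open>card B \<ge> 1\<close> by linarith
    qed
    then obtain A1 B1 where AB1: "is_matching A1" "is_matching B1" "A1 \<inter> B1 = {}" "A1 \<union> B1 = A0 \<union> B0"
          "card A1 < card A0" "card B1 < card A0" by blast
    have A0s: "A0 \<subseteq> A" "a \<notin> A0" and B0s: "B0 \<subseteq> B" "b \<notin> B0" unfolding A0_def B0_def by auto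
    have afree: "\<forall>f\<in>A0\<union>B0. f \<inter> a = {}"
    proof
      fix f assume f: "f \<in> A0 \<union> B0"
      show "f \<inter> a = {}"
      proof (rule ccontr)
        assume "f \<inter> a \<noteq> {}"
        hence "v \<in> f \<or> w \<in> f" using w(1) by blast
        thus False
        proof
          assume vf: "v \<in> f"
          show False
          proof (cases "f \<in> A0")
            case True
            hence "f \<inter> a = {}" using matchingD[OF less.prems(4) _ a(1)] A0s by blast
            thus False using vf a(2) by blast
          next
            case False hence "f \<in> B" using f B0s by blast
            thus False using vf v by blast
          qed
        next
          assume wf: "w \<in> f"
          show False
          proof (cases "f \<in> A0")
            case True
            hence "f \<inter> a = {}" using matchingD[OF less.prems(4) _ a(1)] A0s by blast
            thus False using wf w(1) by blast
          next
            case False hence "f \<in> B" "f \<noteq> b" using f B0s by blast+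
            hence "f \<inter> b = {}" using matchingD[OF less.prems(5) _ b(1)] by blast
            thus False using wf wb by blast
          qed
        qed
      qed
    qed
    have bpart: "\<forall>f\<in>A0\<union>B0. f \<inter> b \<noteq> {} \<longrightarrow> f \<in> A \<and> x \<in> f"
    proof (intro ballI impI)
      fix f assume f: "f \<in> A0 \<union> B0" "f \<inter> b \<noteq> {}"
      hence "w \<in> f \<or> x \<in> f" using x(1) by blast
      moreover have "w \<notin> f" using afree f(1) w(1) by blast
      ultimately have xf: "x \<in> f" by blast
      moreover have "f \<notin> B"
      proof
        assume "f \<in> B"
        moreover have "f \<noteq> b" using f(1) A0s B0s less.prems(3) b(1) by blast
        ultimately have "f \<inter> b = {}" using matchingD[OF less.prems(5) _ b(1)] by blast
        thus False using f(2) by blast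
      qed
      ultimately show "f \<in> A \<and> x \<in> f" using f(1) A0s B0s by blast
    qed
    have abnot: "a \<notin> A1 \<union> B1" "b \<notin> A1 \<union> B1" using AB1(4) unfolding A0_def B0_def
      using less.prems(3) a(1) b(1) by blast+
    have fA1: "finite A1" "finite B1" using AB1(4) less.prems(1,2) unfolding A0_def B0_def
      by (metis finite_Diff finite_Un)+
    show ?thesis
    proof (cases "\<exists>f\<in>B1. f \<inter> b \<noteq> {}")
      case True
      then obtain g where g: "g \<in> B1" "g \<inter> b \<noteq> {}" by blast
      have gA: "g \<in> A" "x \<in> g" using bpart g AB1(4) by blast+
      have b1: "\<forall>f\<in>A1. f \<inter> b = {}"
      proof (intro ballI, rule ccontr)
        fix f assume f: "f \<in> A1" "f \<inter> b \<noteq> {}"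
        hence "f \<in> A" "x \<in> f" using bpart AB1(4) by blast+
        hence "f = g" using gA matchingD[OF less.prems(4)] by blast
        thus False using f g AB1(3) by blast
      qed
      have "is_matching (insert b A1)" using AB1(1) b1 unfolding is_matching_def by blast
      moreover have "is_matching (insert a B1)" using AB1(2,4) afree unfolding is_matching_def by blast
      moreover have "insert b A1 \<inter> insert a B1 = {}" using AB1(3) abnot ab by blast
      moreover have "insert b A1 \<union> insert a B1 = A \<union> B" using AB1(4) a(1) b(1) unfolding A0_def B0_def by blast
      moreover have "card (insert b A1) < card A" using abnot fA1 AB1(5) cA0 by auto
      moreover have "card (insert a B1) < card A" using abnot fA1 AB1(6) cA0 by auto
      ultimately show ?thesis by blast
    next
      case False
      have "is_matching (insert a A1)" using AB1(1,4) afree unfolding is_matching_def by blast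
      moreover have "is_matching (insert b B1)" using AB1(2) False unfolding is_matching_def by blast
      moreover have "insert a A1 \<inter> insert b B1 = {}" using AB1(3) abnot ab by blast
      moreover have "insert a A1 \<union> insert b B1 = A \<union> B" using AB1(4) a(1) b(1) unfolding A0_def B0_def by blast
      moreover have "card (insert a A1) < card A" using abnot fA1 AB1(5) cA0 by auto
      moreover have "card (insert b B1) < card A" using abnot fA1 AB1(6) cA0 by auto
      ultimately show ?thesis by blast
    qed
  qed
qed

definition proper_col :: "'a set set \<Rightarrow> nat \<Rightarrow> ('a set \<Rightarrow> nat) \<Rightarrow> bool" where
  "proper_col E c col \<longleftrightarrow> (\<forall>e\<in>E. col e < c) \<and> (\<forall>e\<in>E. \<forall>f\<in>E. e \<noteq> f \<and> e \<inter> f \<noteq> {} \<longrightarrow> col e \<noteq> col f)"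

lemma greedy_col:
  assumes "finite E" "\<forall>e\<in>E. card {f\<in>E. f \<noteq> e \<and> f \<inter> e \<noteq> {}} \<le> D"
  shows "\<exists>col. proper_col E (Suc D) col"
proof -
  have "finite F \<Longrightarrow> F \<subseteq> E \<Longrightarrow> \<exists>col. proper_col F (Suc D) col" for F
  proof (induction F rule: finite_induct)
    case empty show ?case unfolding proper_col_def by simp
  next
    case (insert e F)
    obtain col where col: "proper_col F (Suc D) col" using insert by blast
    define N where "N = {f\<in>F. f \<noteq> e \<and> f \<inter> e \<noteq> {}}"
    have "N \<subseteq> {f\<in>E. f \<noteq> e \<and> f \<inter> e \<noteq> {}}" using insert unfolding N_def by blast
    moreover have "e \<in> E" using insert(4) by blast
    ultimately have "card N \<le> D"
    proof -
      assume sub: "N \<subseteq> {f\<in>E. f \<noteq> e \<and> f \<inter> e \<noteq> {}}" and eE: "e \<in> E"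
      have "card N \<le> card {f\<in>E. f \<noteq> e \<and> f \<inter> e \<noteq> {}}" using sub assms(1) by (intro card_mono) auto
      thus ?thesis using assms(2) eE by (meson le_trans)
    qed
    moreover have fN: "finite N" using insert(1) unfolding N_def by simp
    ultimately have cN: "card (col ` N) \<le> D" using card_image_le[of N col] by linarith
    have "\<not> {..<Suc D} \<subseteq> col ` N"
    proof
      assume "{..<Suc D} \<subseteq> col ` N"
      hence "card {..<Suc D} \<le> card (col ` N)" using fN by (intro card_mono) auto
      thus False using cN by simp
    qed
    then obtain i where i: "i < Suc D" "i \<notin> col ` N" by blast
    define col' where "col' = col(e := i)"
    have "proper_col (insert e F) (Suc D) col'"
      unfolding proper_col_def
    proof (intro conjI ballI impI)
      fix f assume "f \<in> insert e F" thus "col' f < Suc D" using col i unfolding col'_def proper_col_def by auto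
    next
      fix f g assume fg: "f \<in> insert e F" "g \<in> insert e F" "f \<noteq> g \<and> f \<inter> g \<noteq> {}"
      show "col' f \<noteq> col' g"
      proof (cases "f = e")
        case True
        hence "g \<in> N" using fg insert(2) unfolding N_def by auto
        thus ?thesis using True fg i unfolding col'_def by auto
      next
        case False
        show ?thesis
        proof (cases "g = e")
          case True
          hence "f \<in> N" using fg False unfolding N_def by auto
          thus ?thesis using True fg i unfolding col'_def by auto
        next
          case False2: False
          thus ?thesis using False fg col unfolding col'_def proper_col_def by auto
        qed
      qed
    qed
    thus ?case by blast
  qed
  thus ?thesis using assms(1) by blast
qed

definition cls :: "'a set set \<Rightarrow> ('a set \<Rightarrow> nat) \<Rightarrow> nat \<Rightarrow> 'a set set" where
  "cls E col l = {e\<in>E. col e = l}"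

definition ssq :: "'a set set \<Rightarrow> nat \<Rightarrow> ('a set \<Rightarrow> nat) \<Rightarrow> nat" where
  "ssq E c col = (\<Sum>l<c. card (cls E col l)^2)"

lemma cls_matching: "proper_col E c col \<Longrightarrow> is_matching (cls E col l)"
  unfolding proper_col_def cls_def is_matching_def by blast

lemma sum_two:
  fixes g :: "nat \<Rightarrow> nat"
  assumes "i \<noteq> j" "i < c" "j < c"
  shows "(\<Sum>l<c. g l) = g i + g j + (\<Sum>l\<in>{..<c} - {i,j}. g l)"
proof -
  have "(\<Sum>l<c. g l) = g i + (\<Sum>l\<in>{..<c} - {i}. g l)" using assms by (simp add: sum.remove)
  also have "(\<Sum>l\<in>{..<c} - {i}. g l) = g j + (\<Sum>l\<in>{..<c} - {i} - {j}. g l)" using assms by (intro sum.remove) auto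
  also have "{..<c} - {i} - {j} = {..<c} - {i,j}" by blast
  finally show ?thesis by simp
qed

lemma balance:
  assumes fin: "finite E" and e2: "\<forall>e\<in>E. card e = 2" and pc: "proper_col E c col"
    and minim: "\<forall>col'. proper_col E c col' \<longrightarrow> ssq E c col \<le> ssq E c col'"
    and ij: "i < c" "j < c"
  shows "card (cls E col i) \<le> card (cls E col j) + 1"
proof (rule ccontr)
  assume "\<not> ?thesis"
  hence big: "card (cls E col j) + 2 \<le> card (cls E col i)" by simp
  hence ij': "i \<noteq> j" by auto
  let ?A = "cls E col i" and ?B = "cls E col j"
  have "\<exists>A' B'. is_matching A' \<and> is_matching B' \<and> A' \<inter> B' = {} \<and> A' \<union> B' = ?A \<union> ?B
          \<and> card A' < card ?A \<and> card B' < card ?A"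
    apply (rule swap)
    using fin e2 big ij' cls_matching[OF pc] unfolding cls_def by auto
  then obtain A' B' where AB: "is_matching A'" "is_matching B'" "A' \<inter> B' = {}" "A' \<union> B' = ?A \<union> ?B"
          "card A' < card ?A" "card B' < card ?A" by blast
  define col' where "col' e = (if e \<in> A' then i else if e \<in> B' then j else col e)" for e
  have AB_E: "A' \<subseteq> E" "B' \<subseteq> E" using AB(4) unfolding cls_def by blast+
  have colAB: "\<And>e. e \<in> A' \<union> B' \<Longrightarrow> col e = i \<or> col e = j" using AB(4) unfolding cls_def by blast
  have pc': "proper_col E c col'"
    unfolding proper_col_def
  proof (intro conjI ballI impI)
    fix e assume "e \<in> E" thus "col' e < c" using pc ij unfolding proper_col_def col'_def by auto
  next
    fix e f assume ef: "e \<in> E" "f \<in> E" "e \<noteq> f \<and> e \<inter> f \<noteq> {}"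
    have cef: "col e \<noteq> col f" using pc ef unfolding proper_col_def by blast
    show "col' e \<noteq> col' f"
    proof (cases "e \<in> A' \<union> B'")
      case eAB: True
      show ?thesis
      proof (cases "f \<in> A' \<union> B'")
        case True
        have "\<not> (e \<in> A' \<and> f \<in> A')" using matchingD[OF AB(1)] ef by blast
        moreover have "\<not> (e \<in> B' \<and> f \<in> B')" using matchingD[OF AB(2)] ef by blast
        ultimately show ?thesis using True eAB ij' AB(3) unfolding col'_def by auto
      next
        case False
        have "col f \<noteq> i" "col f \<noteq> j" using False AB(4) ef(2) unfolding cls_def by blast+
        thus ?thesis using False eAB unfolding col'_def by auto
      qed
    next
      case eAB: False
      have "col e \<noteq> i" "col e \<noteq> j" using eAB AB(4) ef(1) unfolding cls_def by blast+
      thus ?thesis using eAB cef unfolding col'_def by auto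
    qed
  qed
  have ci: "cls E col' i = A'"
    using AB_E AB(3,4) ij' unfolding cls_def col'_def by auto
  have cj: "cls E col' j = B'"
    using AB_E AB(3,4) ij' unfolding cls_def col'_def by auto
  have co: "cls E col' l = cls E col l" if "l \<noteq> i" "l \<noteq> j" for l
    using AB_E AB(3,4) that unfolding cls_def col'_def by auto
  have "card A' + card B' = card ?A + card ?B"
  proof -
    have "finite A'" "finite B'" using AB_E fin finite_subset by auto
    hence "card A' + card B' = card (A' \<union> B')" using AB(3) by (simp add: card_Un_disjoint)
    also have "\<dots> = card ?A + card ?B" unfolding AB(4) using fin ij'
      by (intro card_Un_disjoint) (auto simp: cls_def)
    finally show ?thesis .
  qed
  hence "card A'^2 + card B'^2 < card ?A^2 + card ?B^2" using sq_ineq AB(5,6) big by blast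
  hence "ssq E c col' < ssq E c col"
    unfolding ssq_def sum_two[OF ij' ij] ci cj using co by simp
  thus False using minim pc' by (meson not_le)
qed

definition good :: "nat \<Rightarrow> 'a set list \<Rightarrow> bool" where
  "good k es \<longleftrightarrow> (\<forall>p q. p < q \<and> q < length es \<and> q - p < k \<longrightarrow> es!p \<inter> es!q = {})"

lemma card2_fin: "card e = 2 \<Longrightarrow> finite e"
  by (metis card.infinite zero_neq_numeral)

lemma append_step:
  assumes g: "good k es" and d: "distinct es" and c2: "\<forall>e\<in>set es. card e = 2"
    and fM: "finite M" and mM: "is_matching M" and dj: "M \<inter> set es = {}" and big: "3*k \<le> card M"
  shows "\<exists>L. distinct (es @ L) \<and> set L = M \<and> good k (es @ L)"
proof -
  define n where "n = length es"
  define TL where "TL = drop (n - k) es"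
  define T where "T = \<Union>(set TL)"
  have TLs: "set TL \<subseteq> set es" unfolding TL_def by (meson set_drop_subset)
  have fT: "finite T" unfolding T_def
  proof (rule finite_Union)
    show "finite (set TL)" by simp
    fix e assume "e \<in> set TL" thus "finite e" using TLs c2 card2_fin by blast
  qed
  have cT: "card T \<le> 2*k"
  proof -
    have "card T \<le> sum card (set TL)" unfolding T_def by (rule card_Union_le_sum_card)
    also have "\<dots> = sum (\<lambda>_. 2) (set TL)" using TLs c2 by (intro sum.cong) auto
    also have "\<dots> = 2 * card (set TL)" by simp
    also have "card (set TL) \<le> length TL" by (rule card_length)
    also have "length TL \<le> k" unfolding TL_def n_def by simp
    finally show ?thesis by simp
  qed
  define Bad where "Bad = {e\<in>M. e \<inter> T \<noteq> {}}"
  define pick where "pick e = (SOME v. v \<in> e \<inter> T)" for e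
  have pick: "pick e \<in> e \<inter> T" if "e \<in> Bad" for e
  proof -
    have "\<exists>v. v \<in> e \<inter> T" using that unfolding Bad_def by blast
    thus ?thesis unfolding pick_def by (rule someI_ex)
  qed
  have inj: "inj_on pick Bad"
  proof
    fix e f assume ef: "e \<in> Bad" "f \<in> Bad" "pick e = pick f"
    have "pick e \<in> e" "pick f \<in> f" using pick[OF ef(1)] pick[OF ef(2)] by auto
    hence "e \<inter> f \<noteq> {}" using ef(3) by auto
    moreover have "e \<in> M" "f \<in> M" using ef unfolding Bad_def by auto
    ultimately show "e = f" using matchingD[OF mM] by blast
  qed
  have sub: "pick ` Bad \<subseteq> T"
  proof
    fix v assume "v \<in> pick ` Bad"
    then obtain e where "e \<in> Bad" "v = pick e" by blast
    thus "v \<in> T" using pick[of e] by auto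
  qed
  have "card Bad \<le> card T" by (rule card_inj_on_le[OF inj sub fT])
  hence cB: "card Bad \<le> 2*k" using cT by linarith
  have BM: "Bad \<subseteq> M" unfolding Bad_def by blast
  have "card (M - Bad) = card M - card Bad" using BM fM by (meson card_Diff_subset finite_subset)
  hence "k \<le> card (M - Bad)" using cB big by linarith
  then obtain S where S: "S \<subseteq> M - Bad" "card S = k" "finite S" by (meson obtain_subset_with_card_n)
  obtain L1 where L1: "set L1 = S" "distinct L1" using finite_distinct_list S(3) by blast
  obtain L2 where L2: "set L2 = M - S" "distinct L2" using finite_distinct_list fM by blast
  define L where "L = L1 @ L2"
  have lL1: "length L1 = k" using L1 S(2) distinct_card by fastforce
  have dL: "distinct L" unfolding L_def using L1 L2 by auto
  have sL: "set L = M" unfolding L_def using L1 L2 S(1) by auto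
  have dEL: "distinct (es @ L)" using d dL sL dj by auto
  have "good k (es @ L)"
    unfolding good_def
  proof (intro allI impI)
    fix p q assume pq: "p < q \<and> q < length (es @ L) \<and> q - p < k"
    show "(es @ L) ! p \<inter> (es @ L) ! q = {}"
    proof (cases "q < n")
      case True
      thus ?thesis using pq g unfolding good_def n_def by (simp add: nth_append)
    next
      case qn: False
      show ?thesis
      proof (cases "p < n")
        case True
        have ep: "(es @ L) ! p = es ! p" using True n_def by (simp add: nth_append)
        have eq: "(es @ L) ! q = L ! (q - n)" using qn n_def by (simp add: nth_append)
        have "q - n < k" using pq True qn by linarith
        hence "L ! (q - n) = L1 ! (q - n)" unfolding L_def using lL1 by (simp add: nth_append)
        hence "L ! (q - n) \<in> S" using L1(1) lL1 \<open>q - n < k\<close> by (metis nth_mem)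
        hence Lq: "L ! (q - n) \<inter> T = {}" using S(1) unfolding Bad_def by blast
        have "n - k \<le> p" using pq qn by linarith
        hence "es ! p = TL ! (p - (n - k))" unfolding TL_def using True n_def by simp
        moreover have "p - (n - k) < length TL" unfolding TL_def n_def using True n_def \<open>n - k \<le> p\<close> by simp
        ultimately have "es ! p \<in> set TL" by (metis nth_mem)
        hence "es ! p \<subseteq> T" unfolding T_def by blast
        thus ?thesis using ep eq Lq by blast
      next
        case False
        have ep: "(es @ L) ! p = L ! (p - n)" and eq: "(es @ L) ! q = L ! (q - n)"
          using False qn n_def by (simp_all add: nth_append)
        have lt: "p - n < length L" "q - n < length L" using pq False n_def by auto
        have "p - n \<noteq> q - n" using pq False by linarith
        hence "L ! (p - n) \<noteq> L ! (q - n)" using dL lt by (simp add: nth_eq_iff_index_eq)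
        moreover have "L ! (p - n) \<in> M" "L ! (q - n) \<in> M" using lt sL nth_mem by blast+
        ultimately show ?thesis using ep eq matchingD[OF mM] by simp
      qed
    qed
  qed
  thus ?thesis using dEL sL by blast
qed

lemma build_list:
  assumes fE: "finite E" and c2: "\<forall>e\<in>E. card e = 2" and pc: "proper_col E c col"
    and big: "\<forall>j<c. 3*k \<le> card (cls E col j)"
  shows "\<exists>es. distinct es \<and> set es = E \<and> good k es"
proof -
  have "j \<le> c \<Longrightarrow> \<exists>es. distinct es \<and> set es = {e\<in>E. col e < j} \<and> good k es" for j
  proof (induction j)
    case 0 show ?case by (intro exI[of _ "[]"]) (simp add: good_def)
  next
    case (Suc j)
    then obtain es where es: "distinct es" "set es = {e\<in>E. col e < j}" "good k es" by auto
    have "\<exists>L. distinct (es @ L) \<and> set L = cls E col j \<and> good k (es @ L)"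
    proof (rule append_step[OF es(3) es(1)])
      show "\<forall>e\<in>set es. card e = 2" using es(2) c2 by auto
      show "finite (cls E col j)" using fE unfolding cls_def by simp
      show "is_matching (cls E col j)" by (rule cls_matching[OF pc])
      show "cls E col j \<inter> set es = {}" using es(2) unfolding cls_def by auto
      show "3 * k \<le> card (cls E col j)" using big Suc.prems by simp
    qed
    then obtain L where L: "distinct (es @ L)" "set L = cls E col j" "good k (es @ L)" by blast
    have "set (es @ L) = {e\<in>E. col e < Suc j}" using es(2) L(2) unfolding cls_def by auto
    thus ?case using L by blast
  qed
  from this[of c] have "\<exists>es. distinct es \<and> set es = {e\<in>E. col e < c} \<and> good k es" by simp
  moreover have "{e\<in>E. col e < c} = E" using pc unfolding proper_col_def by auto
  ultimately show ?thesis by simp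
qed

lemma card_filter_sum: "finite A \<Longrightarrow> card {x\<in>A. P x} = (\<Sum>x\<in>A. if P x then 1 else 0)"
  by (simp add: sum.If_cases Int_def conj_commute)

lemma handshake:
  assumes "simple_graph V E"
  shows "(\<Sum>v\<in>V. degree E v) = 2 * card E"
proof -
  have fV: "finite V" and sub: "\<forall>e\<in>E. e \<subseteq> V \<and> card e = 2" using assms unfolding simple_graph_def by auto
  have fE: "finite E"
  proof (rule finite_subset)
    show "E \<subseteq> Pow V" using sub by auto
    show "finite (Pow V)" using fV by simp
  qed
  have "(\<Sum>v\<in>V. degree E v) = (\<Sum>v\<in>V. \<Sum>e\<in>E. if v \<in> e then 1 else 0)"
    unfolding degree_def using fE by (intro sum.cong refl card_filter_sum)
  also have "\<dots> = (\<Sum>e\<in>E. \<Sum>v\<in>V. if v \<in> e then 1 else 0)" by (rule sum.swap)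
  also have "\<dots> = (\<Sum>e\<in>E. card {v\<in>V. v \<in> e})"
    using fV by (intro sum.cong refl card_filter_sum[symmetric])
  also have "\<dots> = (\<Sum>e\<in>E. 2)"
  proof (intro sum.cong refl)
    fix e assume "e \<in> E"
    hence "{v\<in>V. v \<in> e} = e" "card e = 2" using sub by auto
    thus "card {v\<in>V. v \<in> e} = 2" by simp
  qed
  finally show ?thesis by simp
qed

lemma nbr_bound:
  assumes sg: "simple_graph V E" and deg: "\<forall>v\<in>V. degree E v = d" and e: "e \<in> E"
  shows "card {f\<in>E. f \<noteq> e \<and> f \<inter> e \<noteq> {}} \<le> (d - 1) + (d - 1)"
proof -
  have fV: "finite V" and sub: "\<forall>e\<in>E. e \<subseteq> V \<and> card e = 2" using sg unfolding simple_graph_def by auto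
  have fE: "finite E"
  proof (rule finite_subset)
    show "E \<subseteq> Pow V" using sub by auto
    show "finite (Pow V)" using fV by simp
  qed
  have "card e = 2" using sub e by blast
  then obtain u w where uw: "e = {u,w}" by (meson card_2_iff)
  have uV: "u \<in> V" "w \<in> V" using sub e uw by auto
  have "{f\<in>E. f \<noteq> e \<and> f \<inter> e \<noteq> {}} \<subseteq> ({f\<in>E. u \<in> f} - {e}) \<union> ({f\<in>E. w \<in> f} - {e})"
  proof
    fix f assume "f \<in> {f\<in>E. f \<noteq> e \<and> f \<inter> e \<noteq> {}}"
    hence "f \<in> E" "f \<noteq> e" "u \<in> f \<or> w \<in> f" using uw by auto
    thus "f \<in> ({f\<in>E. u \<in> f} - {e}) \<union> ({f\<in>E. w \<in> f} - {e})" by auto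
  qed
  hence "card {f\<in>E. f \<noteq> e \<and> f \<inter> e \<noteq> {}} \<le> card (({f\<in>E. u \<in> f} - {e}) \<union> ({f\<in>E. w \<in> f} - {e}))"
    using fE by (intro card_mono) auto
  also have "\<dots> \<le> card ({f\<in>E. u \<in> f} - {e}) + card ({f\<in>E. w \<in> f} - {e})" by (rule card_Un_le)
  also have "card ({f\<in>E. u \<in> f} - {e}) = d - 1"
    using deg uV e uw fE unfolding degree_def by (simp add: card_Diff_singleton)
  also have "card ({f\<in>E. w \<in> f} - {e}) = d - 1"
    using deg uV e uw fE unfolding degree_def by (simp add: card_Diff_singleton)
  finally show ?thesis .
qed

lemma good_window:
  assumes g: "good k0 es" and kk: "k \<le> k0" and ik: "i + k \<le> length es"
  shows "is_matching (set (take k (drop i es)))"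
  unfolding is_matching_def
proof (intro ballI impI)
  fix e f assume e: "e \<in> set (take k (drop i es))" and f: "f \<in> set (take k (drop i es))" and ef: "e \<noteq> f"
  have len: "length (take k (drop i es)) = k" using ik by simp
  obtain s where s: "s < k" "e = take k (drop i es) ! s" using e len by (auto simp: in_set_conv_nth)
  obtain t where t: "t < k" "f = take k (drop i es) ! t" using f len by (auto simp: in_set_conv_nth)
  have es: "e = es ! (i + s)" using s ik by simp
  have ft: "f = es ! (i + t)" using t ik by simp
  have "s \<noteq> t" using ef s t by auto
  hence "s < t \<or> t < s" by linarith
  thus "e \<inter> f = {}"
  proof
    assume st: "s < t"
    have "i + s < i + t" "i + t < length es" "(i + t) - (i + s) < k0" using st t ik kk by linarith+
    hence "es ! (i + s) \<inter> es ! (i + t) = {}" using g unfolding good_def by blast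
    thus ?thesis using es ft by simp
  next
    assume st: "t < s"
    have "i + t < i + s" "i + s < length es" "(i + s) - (i + t) < k0" using st s ik kk by linarith+
    hence "es ! (i + t) \<inter> es ! (i + s) = {}" using g unfolding good_def by blast
    thus ?thesis using es ft by blast
  qed
qed

theorem fact4p16:
  fixes V :: "'a set" and E :: "'a set set"
  assumes "regular_graph V E"
  shows "\<exists>es. distinct es \<and> set es = E \<and>
           (\<forall>i k. 12 * k \<le> card V \<and> i + k \<le> length es \<longrightarrow>
                  is_matching (set (take k (drop i es))))"
proof -
  obtain d where sg: "simple_graph V E" and deg: "\<forall>v\<in>V. degree E v = d"
    using assms unfolding regular_graph_def by blast
  have fV: "finite V" and sub: "\<forall>e\<in>E. e \<subseteq> V \<and> card e = 2" using sg unfolding simple_graph_def by auto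
  have c2: "\<forall>e\<in>E. card e = 2" using sub by blast
  have fE: "finite E"
  proof (rule finite_subset)
    show "E \<subseteq> Pow V" using sub by auto
    show "finite (Pow V)" using fV by simp
  qed
  define k0 where "k0 = card V div 12"
  have win: "\<And>es. good k0 es \<Longrightarrow> (\<forall>i k. 12 * k \<le> card V \<and> i + k \<le> length es \<longrightarrow>
                  is_matching (set (take k (drop i es))))"
  proof (intro allI impI)
    fix es i k assume g: "good k0 es" and ik: "12 * k \<le> card V \<and> i + k \<le> length es"
    have "k \<le> k0" unfolding k0_def using ik by linarith
    thus "is_matching (set (take k (drop i es)))" using good_window g ik by blast
  qed
  show ?thesis
  proof (cases "E = {}")
    case True
    have "good k0 []" unfolding good_def by simp
    thus ?thesis using win True by (intro exI[of _ "[]"]) (simp add: is_matching_def)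
  next
    case False
    then obtain e0 where e0: "e0 \<in> E" by blast
    have "card e0 = 2" using c2 e0 by blast
    then obtain u w where uw: "e0 = {u,w}" by (meson card_2_iff)
    have uV: "u \<in> V" using sub e0 uw by blast
    have "e0 \<in> {f\<in>E. u \<in> f}" using e0 uw by blast
    hence "card {f\<in>E. u \<in> f} > 0" using fE by (metis (no_types, lifting) card_gt_0_iff empty_iff finite_subset mem_Collect_eq subsetI)
    hence d1: "d \<ge> 1" using deg uV unfolding degree_def by fastforce
    define c where "c = Suc ((d - 1) + (d - 1))"
    have "\<exists>col. proper_col E c col" unfolding c_def
      using greedy_col[OF fE] nbr_bound[OF sg deg] by blast
    then obtain col1 where "proper_col E c col1" by blast
    from ex_has_least_nat[of "proper_col E c" col1 "ssq E c", OF this]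
    obtain col where pc: "proper_col E c col" and minim: "\<forall>col'. proper_col E c col' \<longrightarrow> ssq E c col \<le> ssq E c col'"
      by blast
    have bal: "\<And>i j. i < c \<Longrightarrow> j < c \<Longrightarrow> card (cls E col i) \<le> card (cls E col j) + 1"
      using balance[OF fE c2 pc minim] by blast
    have hs: "card V * d = 2 * card E" using handshake[OF sg] deg by simp
    have csum: "card E = (\<Sum>l<c. card (cls E col l))"
    proof -
      have "col ` E \<subseteq> {..<c}" using pc unfolding proper_col_def by auto
      from sum.group[OF fE finite_lessThan this, of "\<lambda>_. 1::nat"]
      show ?thesis unfolding cls_def by simp
    qed
    have cb: "c * (3 * k0) \<le> card E"
    proof -
      have "12 * k0 \<le> card V" unfolding k0_def by simp
      hence "c * (12 * k0) \<le> c * card V" by (rule mult_le_mono2)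
      also have "c \<le> 2 * d" unfolding c_def using d1 by simp
      hence "c * card V \<le> (2 * d) * card V" by (rule mult_le_mono1)
      finally have "c * (12 * k0) \<le> 2 * d * card V" .
      moreover have "2 * d * card V = 4 * card E" using hs by (simp add: algebra_simps)
      moreover have "c * (12 * k0) = 4 * (c * (3 * k0))" by (simp add: algebra_simps)
      ultimately show ?thesis by linarith
    qed
    have big: "\<forall>j<c. 3 * k0 \<le> card (cls E col j)"
    proof (intro allI impI, rule ccontr)
      fix j assume j: "j < c" and nb: "\<not> 3 * k0 \<le> card (cls E col j)"
      have "card E = card (cls E col j) + (\<Sum>l\<in>{..<c} - {j}. card (cls E col l))"
        using csum j by (simp add: sum.remove)
      also have "(\<Sum>l\<in>{..<c} - {j}. card (cls E col l)) \<le> (\<Sum>l\<in>{..<c} - {j}. 3 * k0)"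
      proof (rule sum_mono)
        fix l assume "l \<in> {..<c} - {j}"
        hence "card (cls E col l) \<le> card (cls E col j) + 1" using bal j by auto
        thus "card (cls E col l) \<le> 3 * k0" using nb by linarith
      qed
      also have "(\<Sum>l\<in>{..<c} - {j}. 3 * k0) = (c - 1) * (3 * k0)" using j by simp
      finally have "card E \<le> card (cls E col j) + (c - 1) * (3 * k0)" by simp
      moreover have "c * (3 * k0) = 3 * k0 + (c - 1) * (3 * k0)" using j
        by (metis One_nat_def Suc_pred add.commute gr_zeroI less_nat_zero_code mult_Suc)
      ultimately show False using cb nb by linarith
    qed
    obtain es where es: "distinct es" "set es = E" "good k0 es"
      using build_list[OF fE c2 pc big] by blast
    thus ?thesis using win by blast
  qed
qed

end
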